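(* Let $\mathcal{R}_1$ be the family of all south-west quadrants and $\mathcal{R}_2 = \{\{(x,y) \in \mathbb{R}^2 : a \leq x+y \leq b\} : a,b \in \mathbb{R}\}$ the family of all diagonal strips of slope $-1$. Then for $\mathcal{R} = \mathcal{R}_1 \cup \mathcal{R}_2$ we have $m_{\mathcal{R}}(2) = \infty$.
   Context: South-west quadrants: $\{\{(x,y) : x \leq a,\ y \leq b\} : a,b \in \mathbb{R}\}$. For finite $V \subset \mathbb{R}^2$, $\mathcal{H}(V,\mathcal{R},m)$ is the hypergraph on $V$ whose hyperedges are the sets $V \cap R$, $R \in \mathcal{R}$, of size exactly $m$. A coloring is polychromatic if every hyperedge contains each color. Point sets are in general position (pairwise distinct $x$-coordinates, $y$-coordinates and values $x+y$). $m_{\mathcal{R}}(k)$ is the smallest $m$ such that for every finite $V$ in general position $\mathcal{H}(V,\mathcal{R},m)$ admits a polychromatic $k$-coloring, and $\infty$ if no such $m$ exists. *)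

theory Defs
  imports Complex_Main "HOL-Library.Extended_Nat"
begin

type_synonym point = "real \<times> real"

definition sw_quadrants :: "point set set" where
  "sw_quadrants = {{p. fst p \<le> a \<and> snd p \<le> b} | a b. True}"

definition diag_strips :: "point set set" where
  "diag_strips = {{p. a \<le> fst p + snd p \<and> fst p + snd p \<le> b} | a b. True}"

definition hyperedges :: "point set \<Rightarrow> point set set \<Rightarrow> nat \<Rightarrow> point set set" where
  "hyperedges V R m = {V \<inter> S | S. S \<in> R \<and> card (V \<inter> S) = m}"

definition polychromatic_coloring :: "point set \<Rightarrow> point set set \<Rightarrow> nat \<Rightarrow> (point \<Rightarrow> nat) \<Rightarrow> bool" where
  "polychromatic_coloring V H k c \<longleftrightarrow>
     (\<forall>v\<in>V. c v < k) \<and> (\<forall>E\<in>H. \<forall>i<k. \<exists>v\<in>E. c v = i)"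

definition general_position :: "point set \<Rightarrow> bool" where
  "general_position V \<longleftrightarrow>
     inj_on fst V \<and> inj_on snd V \<and> inj_on (\<lambda>p. fst p + snd p) V"

definition m_good :: "point set set \<Rightarrow> nat \<Rightarrow> nat \<Rightarrow> bool" where
  "m_good R k m \<longleftrightarrow>
     (\<forall>V. finite V \<and> general_position V \<longrightarrow>
        (\<exists>c. polychromatic_coloring V (hyperedges V R m) k c))"

definition m_R :: "point set set \<Rightarrow> nat \<Rightarrow> enat" where
  "m_R R k = (if \<exists>m. m_good R k m then enat (LEAST m. m_good R k m) else \<infinity>)"

end

theory Submission
  imports Defs
begin


definition Tm :: "nat \<Rightarrow> nat" where "Tm m = m^(m-1)"
definition Fm :: "nat \<Rightarrow> int" where "Fm m = int (Tm m) + 1"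
definition Em :: "nat \<Rightarrow> int" where "Em m = 4 * int m * Fm m"
definition Xc :: "nat \<Rightarrow> nat \<Rightarrow> nat \<Rightarrow> int" where
  "Xc m d a = Em m * int (a * m^(m-1-d)) - int (m-1-d) * Fm m + int a"
definition Yc :: "nat \<Rightarrow> nat \<Rightarrow> nat \<Rightarrow> int" where
  "Yc m d a = Em m * (1 - int ((a+1) * m^(m-1-d))) - int (m-1-d) * Fm m"

lemma pow_le_T: "1 \<le> m \<Longrightarrow> d \<le> m-1 \<Longrightarrow> m^d \<le> Tm m"
  unfolding Tm_def by (rule power_increasing) auto

lemma zero_lem: "(0::int) < E \<Longrightarrow> \<bar>r\<bar> < E \<Longrightarrow> E * k = r \<Longrightarrow> k = 0"
  by (metis abs_mult abs_of_pos mult_less_cancel_left2 zero_less_abs_iff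
      linorder_not_le int_one_le_iff_zero_less less_le_not_le)

lemma div_eq: "0 < (M::nat) \<Longrightarrow> (b div M = a) \<longleftrightarrow> (a*M \<le> b \<and> b < (a+1)*M)"
  by (metis Suc_eq_plus1 div_nat_eqI div_times_less_eq_dividend
    dividend_less_div_times mult.commute mult_Suc)

lemma consts_bounds:
  assumes "1 \<le> m"
  shows "int (Tm m) < Fm m" "0 < Fm m" "Em m = 4 * int (m-1) * Fm m + 4 * Fm m" "1 \<le> Tm m"
proof -
  show "int (Tm m) < Fm m" unfolding Fm_def by simp
  then show "0 < Fm m" by linarith
  show "Em m = 4 * int (m-1) * Fm m + 4 * Fm m" using assms unfolding Em_def
    by (simp add: algebra_simps of_nat_diff)
  show "1 \<le> Tm m" using assms unfolding Tm_def by simp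
qed

lemma L1:
  assumes m: "1 \<le> m" and d: "d \<le> m-1" and a: "a < m^d" and b: "b < m^(m-1)"
  shows "(Xc m d a \<le> Xc m (m-1) b \<and> Yc m d a \<le> Yc m (m-1) b) \<longleftrightarrow> b div m^(m-1-d) = a"
proof -
  define M where "M = m^(m-1-d)"
  define E where "E = Em m"
  define F where "F = Fm m"
  define k where "k = int (m-1-d)"
  have M1: "1 \<le> M" using m unfolding M_def by simp
  note cb = consts_bounds[OF m]
  have bT: "int b < F" using b cb(1) unfolding Tm_def F_def by linarith
  have kF: "0 \<le> k * F" "k * F \<le> int (m-1) * F" using cb(2) unfolding k_def F_def
    by (auto intro: mult_right_mono)
  have nF: "0 \<le> int (m-1) * F" using cb(2) unfolding F_def by simp
  have E1: "E = 4 * int (m-1) * F + 4 * F" using cb(3) unfolding E_def F_def by simp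
  have "0 < F" using cb(2) unfolding F_def .
  then have E: "E = 4 * int (m-1) * F + 4 * F" "0 < E" using E1 nF by linarith+
  have Xq: "Xc m (m-1) b = E * int b + int b" unfolding Xc_def E_def by simp
  have Yq: "Yc m (m-1) b = - E * int b" unfolding Yc_def E_def by (simp add: algebra_simps)
  have Xp: "Xc m d a = E * int (a*M) - k * F + int a" unfolding Xc_def E_def M_def k_def F_def by simp
  have Yp: "Yc m d a = E * (1 - int ((a+1)*M)) - k * F" unfolding Yc_def E_def M_def k_def F_def by simp
  have deq: "b div M = a \<longleftrightarrow> (a*M \<le> b \<and> b < (a+1)*M)" using div_eq M1 by simp
  show ?thesis
  proof
    assume H: "Xc m d a \<le> Xc m (m-1) b \<and> Yc m d a \<le> Yc m (m-1) b"
    have "a*M \<le> b"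
    proof (rule ccontr)
      assume "\<not> a*M \<le> b"
      then have "b + 1 \<le> a*M" by simp
      then have "int (b + 1) \<le> int (a*M)" by (simp only: of_nat_le_iff)
      then have "int b + 1 \<le> int (a*M)" by (simp only: of_nat_add of_nat_1)
      then have "E * (int b + 1) \<le> E * int (a*M)" using E(2) by (intro mult_left_mono) auto
      moreover have "E * (int b + 1) = E * int b + E" by (simp add: algebra_simps)
      ultimately show False using H Xq Xp kF E bT by linarith
    qed
    moreover have "b < (a+1)*M"
    proof (rule ccontr)
      assume "\<not> b < (a+1)*M"
      then have "int ((a+1)*M) \<le> int b" by (simp only: of_nat_le_iff not_less)
      then have "E * int ((a+1)*M) \<le> E * int b" using E(2) by (intro mult_left_mono) auto
      moreover have "E * (1 - int ((a+1)*M)) = E - E * int ((a+1)*M)" by (simp add: algebra_simps)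
      moreover have "- E * int b = - (E * int b)" by simp
      ultimately show False using H Yq Yp kF E bT by linarith
    qed
    ultimately show "b div m^(m-1-d) = a" using deq unfolding M_def by simp
  next
    assume "b div m^(m-1-d) = a"
    then have h: "a*M \<le> b" "b < (a+1)*M" using deq M_def by auto
    have "a \<le> a*M" using M1 by simp
    have aMb: "int (a*M) \<le> int b" using h(1) by (simp only: of_nat_le_iff)
    have "E * int (a*M) \<le> E * int b" using aMb E(2) by (intro mult_left_mono) auto
    moreover have "b + 1 \<le> (a+1)*M" using h by simp
    then have "int (b + 1) \<le> int ((a+1)*M)" by (simp only: of_nat_le_iff)
    then have "int b + 1 \<le> int ((a+1)*M)" by (simp only: of_nat_add of_nat_1)
    then have "E * (int b + 1) \<le> E * int ((a+1)*M)" using E(2) by (intro mult_left_mono) auto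
    moreover have "E * (int b + 1) = E * int b + E" by (simp add: algebra_simps)
    moreover have "E * (1 - int ((a+1)*M)) = E - E * int ((a+1)*M)" by (simp add: algebra_simps)
    moreover have "- E * int b = - (E * int b)" by simp
    moreover have "int a \<le> int (a*M)" using \<open>a \<le> a*M\<close> by (simp only: of_nat_le_iff)
    ultimately show "Xc m d a \<le> Xc m (m-1) b \<and> Yc m d a \<le> Yc m (m-1) b"
      using Xq Yq Xp Yp kF aMb by linarith
  qed
qed

lemma setup_facts:
  assumes m: "1 \<le> m"
  shows "0 < Fm m" "Em m = 4 * int (m-1) * Fm m + 4 * Fm m" "0 \<le> int (m-1) * Fm m"
    "\<And>d a. d \<le> m-1 \<Longrightarrow> a < m^d \<Longrightarrow> int a < Fm m"
    "\<And>d. d \<le> m-1 \<Longrightarrow> 0 \<le> int (m-1-d) * Fm m \<and> int (m-1-d) * Fm m \<le> int (m-1) * Fm m"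
    "int (m-1) \<le> int (m-1) * Fm m"
proof -
  note cb = consts_bounds[OF m]
  show "0 < Fm m" "Em m = 4 * int (m-1) * Fm m + 4 * Fm m" using cb by auto
  show "0 \<le> int (m-1) * Fm m" using cb by simp
  show "int a < Fm m" if "d \<le> m-1" "a < m^d" for d a
    using pow_le_T[OF m that(1)] that(2) cb(1) by linarith
  show "0 \<le> int (m-1-d) * Fm m \<and> int (m-1-d) * Fm m \<le> int (m-1) * Fm m" if "d \<le> m-1" for d
    using cb(2) by (auto intro: mult_right_mono)
  have "int (m-1) * 1 \<le> int (m-1) * Fm m" by (rule mult_left_mono) (use cb(2) in auto)
  then show "int (m-1) \<le> int (m-1) * Fm m" by simp
qed

lemma X_inj:
  assumes m: "1 \<le> m" and "d \<le> m-1" "a < m^d" "d' \<le> m-1" "a' < m^d'"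
    and eq: "Xc m d a = Xc m d' a'"
  shows "d = d' \<and> a = a'"
proof -
  define E where "E = Em m"
  define F where "F = Fm m"
  define k where "k = int (m-1-d)"
  define k' where "k' = int (m-1-d')"
  define A where "A = int (a * m^(m-1-d))"
  define A' where "A' = int (a' * m^(m-1-d'))"
  note sf = setup_facts[OF m, folded E_def F_def]
  have ab: "int a < F" "int a' < F" using sf(4) assms unfolding F_def by auto
  have kb: "0 \<le> k*F" "k*F \<le> int (m-1) * F" "0 \<le> k'*F" "k'*F \<le> int (m-1) * F"
    using sf(5) assms unfolding k_def k'_def F_def by auto
  have "E * A - k*F + int a = E * A' - k'*F + int a'" using eq unfolding Xc_def E_def F_def k_def k'_def A_def A'_def by simp
  then have e1: "E * (A - A') = k*F - k'*F - int a + int a'" by (simp add: algebra_simps)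
  have "A - A' = 0" apply (rule zero_lem[OF _ _ e1]) using sf ab kb unfolding abs_less_iff by linarith+
  then have "F * (k - k') = int a - int a'" using e1 by (simp add: algebra_simps)
  moreover have "\<bar>int a - int a'\<bar> < F" using ab unfolding abs_less_iff by linarith
  ultimately have "k - k' = 0" using zero_lem[of F] sf(1) by blast
  then have "k = k'" by simp
  then have "d = d'" unfolding k_def k'_def using assms by simp
  moreover have "a = a'" using e1 \<open>A - A' = 0\<close> \<open>k = k'\<close> by simp
  ultimately show ?thesis by simp
qed

lemma Y_inj:
  assumes m: "1 \<le> m" and "d \<le> m-1" "a < m^d" "d' \<le> m-1" "a' < m^d'"
    and eq: "Yc m d a = Yc m d' a'"
  shows "d = d' \<and> a = a'"
proof -
  define E where "E = Em m"
  define F where "F = Fm m"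
  define k where "k = int (m-1-d)"
  define k' where "k' = int (m-1-d')"
  define B where "B = int ((a+1) * m^(m-1-d))"
  define B' where "B' = int ((a'+1) * m^(m-1-d'))"
  note sf = setup_facts[OF m, folded E_def F_def]
  have kb: "0 \<le> k*F" "k*F \<le> int (m-1) * F" "0 \<le> k'*F" "k'*F \<le> int (m-1) * F"
    using sf(5) assms unfolding k_def k'_def F_def by auto
  have "E * (1 - B) - k*F = E * (1 - B') - k'*F" using eq unfolding Yc_def E_def F_def k_def k'_def B_def B'_def by simp
  then have e1: "E * (B' - B) = k*F - k'*F" by (simp add: algebra_simps)
  have "B' - B = 0" apply (rule zero_lem[OF _ _ e1]) using sf kb unfolding abs_less_iff by linarith+
  then have "k*F - k'*F = 0" using e1 by simp
  then have "(k - k')*F = 0" by (simp only: left_diff_distrib)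
  then have "k = k'" using sf(1) by simp
  then have "d = d'" unfolding k_def k'_def using assms by simp
  moreover have "a = a'" using \<open>B' - B = 0\<close> \<open>d = d'\<close> m unfolding B_def B'_def by simp
  ultimately show ?thesis by simp
qed

definition Uc :: "nat \<Rightarrow> nat \<Rightarrow> nat \<Rightarrow> int" where
  "Uc m d a = Em m * (1 - int (m^(m-1-d))) - 2 * int (m-1-d) * Fm m + int a"

lemma U_eq: "Xc m d a + Yc m d a = Uc m d a"
  unfolding Xc_def Yc_def Uc_def by (simp add: algebra_simps)

lemma U_inj:
  assumes m: "1 \<le> m" and "d \<le> m-1" "a < m^d" "d' \<le> m-1" "a' < m^d'"
    and eq: "Uc m d a = Uc m d' a'"
  shows "d = d' \<and> a = a'"
proof -
  define E where "E = Em m"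
  define F where "F = Fm m"
  define k where "k = int (m-1-d)"
  define k' where "k' = int (m-1-d')"
  define W where "W = 1 - int (m^(m-1-d))"
  define W' where "W' = 1 - int (m^(m-1-d'))"
  note sf = setup_facts[OF m, folded E_def F_def]
  have ab: "int a < F" "int a' < F" using sf(4) assms unfolding F_def by auto
  have kb: "0 \<le> k*F" "k*F \<le> int (m-1) * F" "0 \<le> k'*F" "k'*F \<le> int (m-1) * F"
    using sf(5) assms unfolding k_def k'_def F_def by auto
  have "E * W - 2*k*F + int a = E * W' - 2*k'*F + int a'" using eq unfolding Uc_def E_def F_def k_def k'_def W_def W'_def by simp
  then have e1: "E * (W - W') = 2*k*F - 2*k'*F - int a + int a'" by (simp add: algebra_simps)
  have "W - W' = 0" apply (rule zero_lem[OF _ _ e1]) using sf ab kb unfolding abs_less_iff by linarith+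
  then have "F * (2*k - 2*k') = int a - int a'" using e1 by (simp add: algebra_simps)
  moreover have "\<bar>int a - int a'\<bar> < F" using ab unfolding abs_less_iff by linarith
  ultimately have "2*k - 2*k' = 0" using zero_lem[of F] sf(1) by blast
  then have "k = k'" by simp
  then have "d = d'" unfolding k_def k'_def using assms by simp
  moreover have "a = a'" using e1 \<open>W - W' = 0\<close> \<open>k = k'\<close> by simp
  ultimately show ?thesis by simp
qed

lemma strip_lem:
  assumes m: "1 \<le> m" and d: "d < m-1" "a < m^d" and d': "d' \<le> m-1" "a' < m^d'"
  shows "(Uc m (d+1) (m*a) \<le> Uc m d' a' \<and> Uc m d' a' \<le> Uc m (d+1) (m*a) + int (m-1))
     \<longleftrightarrow> (d' = d+1 \<and> a' div m = a)"
proof -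
  define E where "E = Em m"
  define F where "F = Fm m"
  define k where "k = int (m-1-(d+1))"
  define k' where "k' = int (m-1-d')"
  define W where "W = 1 - int (m^(m-1-(d+1)))"
  define W' where "W' = 1 - int (m^(m-1-d'))"
  note sf = setup_facts[OF m, folded E_def F_def]
  have "a + 1 \<le> m^d" using d by simp
  then have "m*(a+1) \<le> m*m^d" by (rule mult_left_mono) simp
  then have ma: "m*a + m \<le> m^(d+1)" by (simp add: algebra_simps)
  have "m^(d+1) \<le> Tm m" using pow_le_T[OF m, of "d+1"] d by simp
  then have "int (m*a) + int m \<le> int (Tm m)" using ma by linarith
  moreover have "int (Tm m) < F" using consts_bounds(1)[OF m] unfolding F_def .
  moreover have "int (m-1) = int m - 1" using m by simp
  ultimately have ab1: "int (m*a) + int (m-1) < F" by linarith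
  have ab: "int (m*a) + int (m-1) < F" "int a' < F" using ab1 sf(4)[of d' a'] d' by auto
  have k1: "0 \<le> k*F \<and> k*F \<le> int (m-1) * F" unfolding k_def by (rule sf(5)) (use d in simp)
  have k2: "0 \<le> k'*F \<and> k'*F \<le> int (m-1) * F" unfolding k'_def by (rule sf(5)) (use d' in simp)
  have kb: "0 \<le> k*F" "k*F \<le> int (m-1) * F" "0 \<le> k'*F" "k'*F \<le> int (m-1) * F"
    using k1 k2 by auto
  have U1: "Uc m (d+1) (m*a) = E * W - 2*k*F + int (m*a)" unfolding Uc_def E_def F_def k_def W_def by simp
  have U2: "Uc m d' a' = E * W' - 2*k'*F + int a'" unfolding Uc_def E_def F_def k'_def W'_def by simp
  have dv: "a' div m = a \<longleftrightarrow> (a*m \<le> a' \<and> a' < (a+1)*m)" using div_eq m by simp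
  show ?thesis
  proof
    assume H: "Uc m (d+1) (m*a) \<le> Uc m d' a' \<and> Uc m d' a' \<le> Uc m (d+1) (m*a) + int (m-1)"
    define r where "r = Uc m d' a' - Uc m (d+1) (m*a)"
    have r: "0 \<le> r" "r \<le> int (m-1)" using H unfolding r_def by auto
    have e1: "E * (W' - W) = r + 2*k'*F - 2*k*F - int a' + int (m*a)"
      using U1 U2 unfolding r_def by (simp add: algebra_simps)
    have "W' - W = 0" apply (rule zero_lem[OF _ _ e1]) using sf ab kb r unfolding abs_less_iff by linarith+
    then have "F * (2*k - 2*k') = r - int a' + int (m*a)" using e1 by (simp add: algebra_simps)
    moreover have "\<bar>r - int a' + int (m*a)\<bar> < F" using ab r unfolding abs_less_iff by linarith
    ultimately have "2*k - 2*k' = 0" using zero_lem[of F] sf(1) by blast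
    then have "k = k'" by simp
    then have dd: "d' = d+1" unfolding k_def k'_def using d d' by simp
    have "0 = r - int a' + int (m*a)" using e1 \<open>W' - W = 0\<close> \<open>k = k'\<close> by simp
    then have "int (m*a) \<le> int a'" "int a' \<le> int (m*a) + int (m-1)" using r by linarith+
    then have i1: "int (m*a) \<le> int a'" and i2: "int a' < int (m*a) + int m" using m by (linarith, simp)
    from i1 have "m*a \<le> a'" by (simp only: of_nat_le_iff)
    moreover from i2 have "int a' < int (m*a + m)" by (simp only: of_nat_add)
    then have "a' < m*a + m" by (simp only: of_nat_less_iff)
    ultimately have "m*a \<le> a'" "a' < m*a + m" by auto
    then have "a' div m = a" using dv by (simp add: algebra_simps)
    then show "d' = d+1 \<and> a' div m = a" using dd by simp
  next
    assume H: "d' = d+1 \<and> a' div m = a"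
    then have "a*m \<le> a'" "a' < (a+1)*m" using dv by auto
    then have n1: "m*a \<le> a'" "a' + 1 \<le> m*a + m" by (auto simp: algebra_simps)
    from n1(1) have h1: "int (m*a) \<le> int a'" by (simp only: of_nat_le_iff)
    from n1(2) have "int (a' + 1) \<le> int (m*a + m)" by (simp only: of_nat_le_iff)
    then have "int a' + 1 \<le> int (m*a) + int m" by (simp only: of_nat_add of_nat_1)
    moreover have "int (m-1) = int m - 1" using m by simp
    ultimately have h: "int (m*a) \<le> int a'" "int a' \<le> int (m*a) + int (m-1)" using h1 by linarith+
    have "Uc m d' a' - Uc m (d+1) (m*a) = int a' - int (m*a)" using U1 U2 H
      unfolding k_def k'_def W_def W'_def by simp
    then show "Uc m (d+1) (m*a) \<le> Uc m d' a' \<and> Uc m d' a' \<le> Uc m (d+1) (m*a) + int (m-1)"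
      using h by linarith
  qed
qed



definition Pt :: "nat \<Rightarrow> nat \<times> nat \<Rightarrow> real \<times> real" where
  "Pt m p = (real_of_int (Xc m (fst p) (snd p)), real_of_int (Yc m (fst p) (snd p)))"
definition Nodes :: "nat \<Rightarrow> (nat \<times> nat) set" where
  "Nodes m = {(d,a). d \<le> m-1 \<and> a < m^d}"

lemma Nodes_finite: "1 \<le> m \<Longrightarrow> finite (Nodes m)"
proof -
  assume m: "1 \<le> m"
  have "Nodes m \<subseteq> {..m-1} \<times> {..<Tm m}"
  proof
    fix p assume "p \<in> Nodes m"
    then obtain d a where "p = (d,a)" "d \<le> m-1" "a < m^d" unfolding Nodes_def by blast
    then show "p \<in> {..m-1} \<times> {..<Tm m}" using pow_le_T[OF m, of d] by simp
  qed
  then show ?thesis by (rule finite_subset) simp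
qed

lemma inj_via: "(\<And>p q. p \<in> N \<Longrightarrow> q \<in> N \<Longrightarrow> f (P p) = f (P q) \<Longrightarrow> p = q) \<Longrightarrow> inj_on f (P ` N)"
  unfolding inj_on_def by blast

lemma Nodes_mem: "p \<in> Nodes m \<Longrightarrow> fst p \<le> m-1 \<and> snd p < m^(fst p)"
  unfolding Nodes_def by auto

lemma Pt_inj: assumes m: "1 \<le> m" shows "inj_on (Pt m) (Nodes m)"
proof (rule inj_onI)
  fix p q assume "p \<in> Nodes m" "q \<in> Nodes m" "Pt m p = Pt m q"
  then show "p = q" using X_inj[OF m, of "fst p" "snd p" "fst q" "snd q"] Nodes_mem[of p m] Nodes_mem[of q m]
    unfolding Pt_def by (simp add: prod_eq_iff)
qed

lemma gp: assumes m: "1 \<le> m" shows "general_position (Pt m ` Nodes m)"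
  unfolding general_position_def
proof (intro conjI)
  show "inj_on fst (Pt m ` Nodes m)"
  proof (rule inj_via)
    fix p q assume "p \<in> Nodes m" "q \<in> Nodes m" "fst (Pt m p) = fst (Pt m q)"
    then show "p = q" using X_inj[OF m, of "fst p" "snd p" "fst q" "snd q"] Nodes_mem[of p m] Nodes_mem[of q m]
      unfolding Pt_def by (simp add: prod_eq_iff)
  qed
  show "inj_on snd (Pt m ` Nodes m)"
  proof (rule inj_via)
    fix p q assume "p \<in> Nodes m" "q \<in> Nodes m" "snd (Pt m p) = snd (Pt m q)"
    then show "p = q" using Y_inj[OF m, of "fst p" "snd p" "fst q" "snd q"] Nodes_mem[of p m] Nodes_mem[of q m]
      unfolding Pt_def by (simp add: prod_eq_iff)
  qed
  have U: "fst (Pt m p) + snd (Pt m p) = real_of_int (Uc m (fst p) (snd p))" for p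
    unfolding Pt_def U_eq[symmetric] by simp
  show "inj_on (\<lambda>p. fst p + snd p) (Pt m ` Nodes m)"
  proof (rule inj_via)
    fix p q assume "p \<in> Nodes m" "q \<in> Nodes m" "fst (Pt m p) + snd (Pt m p) = fst (Pt m q) + snd (Pt m q)"
    then show "p = q" using U_inj[OF m, of "fst p" "snd p" "fst q" "snd q"] Nodes_mem[of p m] Nodes_mem[of q m]
      unfolding U by (simp add: prod_eq_iff)
  qed
qed

definition Path :: "nat \<Rightarrow> nat \<Rightarrow> (nat \<times> nat) set" where
  "Path m b = (\<lambda>d. (d, b div m^(m-1-d))) ` {..m-1}"

lemma Path_sub: assumes m: "1 \<le> m" and b: "b < m^(m-1)" shows "Path m b \<subseteq> Nodes m"
proof
  fix p assume "p \<in> Path m b"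
  then obtain d where d: "d \<le> m-1" "p = (d, b div m^(m-1-d))" unfolding Path_def by blast
  have "m-1 = (m-1-d)+d" using d(1) by simp
  then have "m^(m-1) = m^(m-1-d) * m^d" by (metis power_add)
  then have "b div m^(m-1-d) < m^d" using b m by (simp add: div_less_iff_less_mult mult.commute)
  then show "p \<in> Nodes m" using d unfolding Nodes_def by simp
qed

lemma Path_card: "card (Path m b) = m" if "1 \<le> m"
proof -
  have "inj_on (\<lambda>d. (d, b div m^(m-1-d))) {..m-1}" by (rule inj_onI) simp
  then show ?thesis unfolding Path_def using that by (simp add: card_image)
qed

lemma quad_edge:
  assumes m: "1 \<le> m" and b: "b < m^(m-1)"
  shows "Pt m ` Nodes m \<inter> {p. fst p \<le> real_of_int (Xc m (m-1) b) \<and> snd p \<le> real_of_int (Yc m (m-1) b)}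
         = Pt m ` Path m b"
proof
  show "Pt m ` Nodes m \<inter> {p. fst p \<le> real_of_int (Xc m (m-1) b) \<and> snd p \<le> real_of_int (Yc m (m-1) b)}
         \<subseteq> Pt m ` Path m b"
  proof
    fix x assume "x \<in> Pt m ` Nodes m \<inter> {p. fst p \<le> real_of_int (Xc m (m-1) b) \<and> snd p \<le> real_of_int (Yc m (m-1) b)}"
    then obtain d a where da: "d \<le> m-1" "a < m^d" "x = Pt m (d,a)"
      and le: "Xc m d a \<le> Xc m (m-1) b" "Yc m d a \<le> Yc m (m-1) b"
      unfolding Nodes_def Pt_def by auto
    then have "b div m^(m-1-d) = a" using L1[OF m da(1) da(2) b] by simp
    then have "(d,a) \<in> Path m b" unfolding Path_def using da by auto
    then show "x \<in> Pt m ` Path m b" using da by simp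
  qed
  show "Pt m ` Path m b \<subseteq> Pt m ` Nodes m \<inter> {p. fst p \<le> real_of_int (Xc m (m-1) b) \<and> snd p \<le> real_of_int (Yc m (m-1) b)}"
  proof
    fix x assume "x \<in> Pt m ` Path m b"
    then obtain d where d: "d \<le> m-1" "x = Pt m (d, b div m^(m-1-d))" unfolding Path_def by blast
    have "(d, b div m^(m-1-d)) \<in> Nodes m" using Path_sub[OF m b] d unfolding Path_def by auto
    then have a: "b div m^(m-1-d) < m^d" unfolding Nodes_def by simp
    have "Xc m d (b div m^(m-1-d)) \<le> Xc m (m-1) b \<and> Yc m d (b div m^(m-1-d)) \<le> Yc m (m-1) b"
      using L1[OF m d(1) a b] by simp
    moreover have "x \<in> Pt m ` Nodes m" using d(2) \<open>(d, b div m^(m-1-d)) \<in> Nodes m\<close> by blast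
    ultimately show "x \<in> Pt m ` Nodes m \<inter> {p. fst p \<le> real_of_int (Xc m (m-1) b) \<and> snd p \<le> real_of_int (Yc m (m-1) b)}"
      using d(2) unfolding Pt_def by simp
  qed
qed

definition Ch :: "nat \<Rightarrow> nat \<Rightarrow> nat \<Rightarrow> (nat \<times> nat) set" where
  "Ch m d a = (\<lambda>a'. (d+1, a')) ` {m*a..<m*a+m}"

lemma Ch_card: "card (Ch m d a) = m"
proof -
  have "inj_on (\<lambda>a'. (d+1, a')) {m*a..<m*a+m}" by (rule inj_onI) simp
  then show ?thesis unfolding Ch_def by (simp add: card_image)
qed

lemma Ch_mem: fixes m :: nat assumes m: "1 \<le> m" shows "a' \<in> {m*a..<m*a+m} \<longleftrightarrow> a' div m = a"
  using div_eq[of m a' a] m by (auto simp: algebra_simps)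

lemma strip_edge:
  assumes m: "1 \<le> m" and d: "d < m-1" "a < m^d"
  shows "Pt m ` Nodes m \<inter> {p. real_of_int (Uc m (d+1) (m*a)) \<le> fst p + snd p \<and>
             fst p + snd p \<le> real_of_int (Uc m (d+1) (m*a) + int (m-1))} = Pt m ` Ch m d a"
    (is "?L = ?R")
proof -
  have U: "fst (Pt m p) + snd (Pt m p) = real_of_int (Uc m (fst p) (snd p))" for p
    unfolding Pt_def U_eq[symmetric] by simp
  have "a + 1 \<le> m^d" using d by simp
  then have "m*(a+1) \<le> m*m^d" by (rule mult_left_mono) simp
  then have ma: "m*a + m \<le> m^(d+1)" by (simp add: algebra_simps)
  have ChN: "Ch m d a \<subseteq> Nodes m" unfolding Ch_def Nodes_def using ma d by auto
  show ?thesis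
  proof
    show "?L \<subseteq> ?R"
    proof
      fix x assume x: "x \<in> ?L"
      then obtain p where p: "p \<in> Nodes m" "x = Pt m p" by blast
      have "Uc m (d+1) (m*a) \<le> Uc m (fst p) (snd p) \<and> Uc m (fst p) (snd p) \<le> Uc m (d+1) (m*a) + int (m-1)"
        using x p U[of p] by simp
      then have "fst p = d+1 \<and> snd p div m = a"
        using strip_lem[OF m d, of "fst p" "snd p"] Nodes_mem[OF p(1)] by simp
      then have "p \<in> Ch m d a" unfolding Ch_def using Ch_mem[OF m, of "snd p" a]
        by (metis (no_types, lifting) image_eqI prod.collapse)
      then show "x \<in> ?R" using p by simp
    qed
    show "?R \<subseteq> ?L"
    proof
      fix x assume "x \<in> ?R"
      then obtain p where p: "p \<in> Ch m d a" "x = Pt m p" by blast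
      then have pN: "p \<in> Nodes m" using ChN by auto
      from p obtain a' where a': "p = (d+1, a')" "a' \<in> {m*a..<m*a+m}" unfolding Ch_def by blast
      then have "a' div m = a" using Ch_mem[OF m] by simp
      then have "Uc m (d+1) (m*a) \<le> Uc m (fst p) (snd p) \<and> Uc m (fst p) (snd p) \<le> Uc m (d+1) (m*a) + int (m-1)"
        using strip_lem[OF m d, of "fst p" "snd p"] Nodes_mem[OF pN] a' by simp
      then show "x \<in> ?L" using p pN U[of p] by simp
    qed
  qed
qed

lemma not_good:
  assumes m: "1 \<le> m"
  shows "\<not> m_good (sw_quadrants \<union> diag_strips) 2 m"
proof
  let ?R = "sw_quadrants \<union> diag_strips"
  let ?V = "Pt m ` Nodes m"
  assume "m_good ?R 2 m"
  then obtain c where pc: "polychromatic_coloring ?V (hyperedges ?V ?R m) 2 c"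
    unfolding m_good_def using Nodes_finite[OF m] gp[OF m] by blast
  have cl: "\<And>v. v \<in> ?V \<Longrightarrow> c v < 2" and ce: "\<And>E i. E \<in> hyperedges ?V ?R m \<Longrightarrow> i < 2 \<Longrightarrow> \<exists>v\<in>E. c v = i"
    using pc unfolding polychromatic_coloring_def by auto
  define c0 where "c0 = c (Pt m (0,0))"
  have "(0,0) \<in> Nodes m" unfolding Nodes_def by simp
  then have c0: "c0 < 2" using cl unfolding c0_def by blast
  have inj: "inj_on (Pt m) (Nodes m)" by (rule Pt_inj[OF m])
  have claim: "d \<le> m-1 \<longrightarrow> (\<exists>a < m^d. \<forall>d' \<le> d. c (Pt m (d', a div m^(d-d'))) = c0)" for d
  proof (induction d)
    case 0
    show ?case unfolding c0_def by auto
  next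
    case (Suc d)
    show ?case
    proof
      assume sd: "Suc d \<le> m-1"
      then obtain a where a: "a < m^d" "\<forall>d' \<le> d. c (Pt m (d', a div m^(d-d'))) = c0"
        using Suc by auto
      have dl: "d < m-1" using sd by simp
      let ?S = "{p::real\<times>real. real_of_int (Uc m (d+1) (m*a)) \<le> fst p + snd p \<and>
             fst p + snd p \<le> real_of_int (Uc m (d+1) (m*a) + int (m-1))}"
      have SR: "?S \<in> ?R" unfolding diag_strips_def by blast
      have eq: "?V \<inter> ?S = Pt m ` Ch m d a" by (rule strip_edge[OF m dl a(1)])
      have "a + 1 \<le> m^d" using a by simp
      then have "m*(a+1) \<le> m*m^d" by (rule mult_left_mono) simp
      then have ma: "m*a + m \<le> m^(d+1)" by (simp add: algebra_simps)
      have ChN: "Ch m d a \<subseteq> Nodes m" unfolding Ch_def Nodes_def using ma dl by auto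
      have "card (Pt m ` Ch m d a) = m"
        using card_image[OF inj_on_subset[OF inj ChN]] Ch_card by simp
      then have "Pt m ` Ch m d a \<in> hyperedges ?V ?R m"
        unfolding hyperedges_def using SR eq by (metis (mono_tags, lifting) mem_Collect_eq)
      then obtain v where v: "v \<in> Pt m ` Ch m d a" "c v = c0" using ce c0 by blast
      then obtain a' where a': "v = Pt m (d+1, a')" "a' \<in> {m*a..<m*a+m}" unfolding Ch_def by auto
      have adiv: "a' div m = a" using Ch_mem[OF m] a'(2) by simp
      have a'lt: "a' < m^(Suc d)" using a'(2) ma by simp
      have "\<forall>d' \<le> Suc d. c (Pt m (d', a' div m^(Suc d-d'))) = c0"
      proof (intro allI impI)
        fix d' assume "d' \<le> Suc d"
        then consider "d' = Suc d" | "d' \<le> d" by linarith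
        then show "c (Pt m (d', a' div m^(Suc d-d'))) = c0"
        proof cases
          case 1 then show ?thesis using v a' by simp
        next
          case 2
          then have "Suc d - d' = Suc (d - d')" by simp
          then have "a' div m^(Suc d-d') = a' div m div m^(d-d')" by (simp add: div_mult2_eq)
          then show ?thesis using a(2) 2 adiv by simp
        qed
      qed
      then show "\<exists>a < m^(Suc d). \<forall>d' \<le> Suc d. c (Pt m (d', a div m^(Suc d-d'))) = c0"
        using a'lt by blast
    qed
  qed
  obtain b where b: "b < m^(m-1)" "\<forall>d' \<le> m-1. c (Pt m (d', b div m^(m-1-d'))) = c0"
    using claim[of "m-1"] by auto
  let ?Q = "{p::real\<times>real. fst p \<le> real_of_int (Xc m (m-1) b) \<and> snd p \<le> real_of_int (Yc m (m-1) b)}"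
  have QR: "?Q \<in> ?R" unfolding sw_quadrants_def by blast
  have eq: "?V \<inter> ?Q = Pt m ` Path m b" by (rule quad_edge[OF m b(1)])
  have "card (Pt m ` Path m b) = m"
    using card_image[OF inj_on_subset[OF inj Path_sub[OF m b(1)]]] Path_card[OF m] by simp
  then have "Pt m ` Path m b \<in> hyperedges ?V ?R m"
    unfolding hyperedges_def using QR eq by (metis (mono_tags, lifting) mem_Collect_eq)
  then have "\<exists>v\<in>Pt m ` Path m b. c v = 1 - c0" by (rule ce) simp
  then obtain v where v: "v \<in> Pt m ` Path m b" "c v = 1 - c0" by blast
  then obtain d' where "d' \<le> m-1" "v = Pt m (d', b div m^(m-1-d'))" unfolding Path_def by auto
  then have "c v = c0" using b(2) by simp
  then show False using v(2) c0 by arith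
qed

lemma not_good0: "\<not> m_good (sw_quadrants \<union> diag_strips) 2 0"
proof
  let ?R = "sw_quadrants \<union> diag_strips"
  assume "m_good ?R 2 0"
  then obtain c where pc: "polychromatic_coloring {} (hyperedges {} ?R 0) 2 c"
    unfolding m_good_def general_position_def by auto
  have "{p::real\<times>real. fst p \<le> 0 \<and> snd p \<le> 0} \<in> ?R" unfolding sw_quadrants_def by blast
  then have "{} \<in> hyperedges {} ?R 0" unfolding hyperedges_def by auto
  moreover have "\<forall>E\<in>hyperedges {} ?R 0. \<forall>i<2. \<exists>v\<in>E. c v = i" using pc unfolding polychromatic_coloring_def by blast
  ultimately have "\<forall>i<(2::nat). \<exists>v\<in>({}::(real\<times>real) set). c v = i" by (rule bspec[rotated])
  then have "\<exists>v\<in>({}::(real\<times>real) set). c v = 0" by (rule allE[of _ 0]) simp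
  then show False by simp
qed

theorem corollary7:
  shows "m_R (sw_quadrants \<union> diag_strips) 2 = \<infinity>"
proof -
  have "\<not> m_good (sw_quadrants \<union> diag_strips) 2 m" for m
    using not_good[of m] not_good0 by (cases "m = 0") auto
  then show ?thesis unfolding m_R_def by auto
qed

end
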